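(* Let $f$ be a spherically symmetric solution of (RVM) (equivalently of the reduced system below) with total mass $M$, and let $m(t,r)$ be the enclosed mass, so that $0 \leq m(t,r) \leq M$. Let $r, \ell > 0$ and $w < 0$ be given, let $(\mathcal{R}(t), \mathcal{W}(t), \mathcal{L}(t))$ solve $$\dot{\mathcal{R}} = \frac{\mathcal{W}}{\sqrt{1+\mathcal{W}^2 + \mathcal{L}\mathcal{R}^{-2}}},\quad \dot{\mathcal{W}} = \frac{\mathcal{L}}{\mathcal{R}^3\sqrt{1+\mathcal{W}^2+\mathcal{L}\mathcal{R}^{-2}}} + \frac{m(t,\mathcal{R})}{\mathcal{R}^2},\quad \dot{\mathcal{L}} = 0$$ for all $t \geq 0$ with $\mathcal{R}(0)=r$, $\mathcal{W}(0)=w$, $\mathcal{L}(0)=\ell$ (so $\mathcal{L}(t) = \ell$), and define $$D = \ell + M r \sqrt{1 + w^2 + \ell r^{-2}}.$$ Then: 1. There exists a unique $T_0 > 0$ such that $\mathcal{W}(t) < 0$ for $t \in [0,T_0)$, $\mathcal{W}(T_0) = 0$, and $\mathcal{W}(t) > 0$ for $t \in (T_0,\infty)$. 2. $T_0$ satisfies $$r\left(1 - \sqrt{\frac{D}{r^2w^2 + D}}\right) \leq T_0 \leq \frac{-w r^3\sqrt{1+w^2+\ell r^{-2}}}{\ell}.$$ 3. With $\mathcal{R}_- = r\sqrt{\frac{\ell}{r^2w^2+\ell}}$ and $\mathcal{R}_+ = r\sqrt{\frac{D}{r^2w^2+D}}$, we have $\mathcal{R}_- \leq \mathcal{R}(T_0)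 \leq \mathcal{R}_+$. 4. For all $t \in [0,T_0]$, $\mathcal{W}(t)^2 + \ell\mathcal{R}(t)^{-2} \leq w^2 + \ell r^{-2}$. 5. For all $t \in [0,T_0]$, $$\mathcal{R}(t)^2 \leq \left(r - \frac{|w|}{\sqrt{1+w^2+\ell r^{-2}}}\,t\right)^2 + \frac{D}{r^2(1+w^2+\ell r^{-2})}\,t^2.$$
   Context: The relativistic Vlasov–Maxwell system (RVM) is $\partial_t f + \hat p\cdot\nabla_x f + (E+\hat p\wedge B)\cdot\nabla_p f = 0$, $\partial_t E = \nabla\wedge B - 4\pi j$, $\nabla\cdot E = 4\pi\rho$, $\partial_t B = -\nabla\wedge E$, $\nabla\cdot B = 0$, with $\hat p = p/\sqrt{1+|p|^2}$, $\rho = \int f\,dp$, $j = \int \hat p f\,dp$, and $f \ge 0$. For spherically symmetric solutions (invariant under simultaneous rotation of $x$ and $p$), use the variables $r = |x|$, $w = x\cdot p / r$ (radial momentum), $\ell = |x\times p|^2$ (squared angular momentum), writing $f = f(t,r,w,\ell)$. Then $B = 0$, $\rho(t,r) = \frac{\pi}{r^2}\int_0^\infty\int_{-\infty}^\infty f(t,r,w,\ell)\,dw\,d\ell$, the enclosed mass is $m(t,r) = 4\pi\int_0^r s^2\rho(t,s)\,ds$, $E(t,x) = \frac{m(t,r)}{r^2}\frac{x}{r}$, and $f$ satisfies $$\partial_t f + \frac{w}{\sqrt{1+w^2+\ell r^{-2}}}\partial_r f + \left(\frac{\ell}{r^3\sqrt{1+w^2+\ell r^{-2}}} + \frac{m(t,r)}{r^2}\right)\partial_w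 f = 0.$$ The total mass is $M = \iint_{\mathbb{R}^6} f(0,x,p)\,dp\,dx$, which is conserved, and $0 \le m(t,r) \le M$. *)

theory Defs
  imports "HOL-Analysis.Analysis"
begin

text \<open>Spherically symmetric distribution functions are written in the reduced
variables: f t r w l, with r = |x|, w = radial momentum, l = squared angular momentum.\<close>

definition rho :: "(real \<Rightarrow> real \<Rightarrow> real \<Rightarrow> real \<Rightarrow> real) \<Rightarrow> real \<Rightarrow> real \<Rightarrow> real" where
  "rho f t r = pi / r^2 * (LBINT l:{0<..}. (LBINT w. f t r w l))"

definition enclosed_mass :: "(real \<Rightarrow> real \<Rightarrow> real \<Rightarrow> real \<Rightarrow> real) \<Rightarrow> real \<Rightarrow> real \<Rightarrow> real" where
  "enclosed_mass f t r = 4 * pi * (LBINT s=0..r. s^2 * rho f t s)"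

definition total_mass :: "(real \<Rightarrow> real \<Rightarrow> real \<Rightarrow> real \<Rightarrow> real) \<Rightarrow> real" where
  "total_mass f = 4 * pi * (LBINT s=0..\<infinity>. s^2 * rho f 0 s)"

end

theory Submission
  imports Defs
begin


lemma mono_deriv:
  fixes g g' :: "real \<Rightarrow> real"
  assumes "a \<le> b"
    and d: "\<And>t. a \<le> t \<Longrightarrow> t \<le> b \<Longrightarrow> (g has_real_derivative g' t) (at t within {a..b})"
    and p: "\<And>t. a < t \<Longrightarrow> t < b \<Longrightarrow> g' t \<ge> 0"
  shows "g a \<le> g b"
proof (cases "a = b")
  case True then show ?thesis by simp
next
  case False
  then have ab: "a < b" using assms by simp
  have "\<And>t. a \<le> t \<Longrightarrow> t \<le> b \<Longrightarrow> (g has_derivative (\<lambda>h. g' t * h)) (at t within {a..b})"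
    using d by (simp add: has_field_derivative_def)
  from mvt_simple[OF ab this] obtain x where x: "x \<in> {a<..<b}" "g b - g a = g' x * (b - a)"
    by blast
  have "g' x * (b - a) \<ge> 0" using p[of x] x(1) ab by simp
  then show ?thesis using x(2) by simp
qed

lemma smono_deriv:
  fixes g g' :: "real \<Rightarrow> real"
  assumes ab: "a < b"
    and d: "\<And>t. a \<le> t \<Longrightarrow> t \<le> b \<Longrightarrow> (g has_real_derivative g' t) (at t within {a..b})"
    and p: "\<And>t. a < t \<Longrightarrow> t < b \<Longrightarrow> g' t > 0"
  shows "g a < g b"
proof -
  have "\<And>t. a \<le> t \<Longrightarrow> t \<le> b \<Longrightarrow> (g has_derivative (\<lambda>h. g' t * h)) (at t within {a..b})"
    using d by (simp add: has_field_derivative_def)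
  from mvt_simple[OF ab this] obtain x where x: "x \<in> {a<..<b}" "g b - g a = g' x * (b - a)"
    by blast
  have "g' x * (b - a) > 0" using p[of x] x(1) ab by simp
  then show ?thesis using x(2) by simp
qed

lemma stay_nonpos:
  fixes \<phi> \<phi>' :: "real \<Rightarrow> real"
  assumes T: "0 \<le> T"
    and d: "\<And>t. 0 \<le> t \<Longrightarrow> t \<le> T \<Longrightarrow> (\<phi> has_real_derivative \<phi>' t) (at t within {0..T})"
    and i: "\<phi> 0 \<le> 0"
    and p: "\<And>t. 0 \<le> t \<Longrightarrow> t \<le> T \<Longrightarrow> \<phi> t > 0 \<Longrightarrow> \<phi>' t \<le> 0"
    and t1: "0 \<le> t1" "t1 \<le> T"
  shows "\<phi> t1 \<le> 0"
proof (rule ccontr)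
  assume neg: "\<not> \<phi> t1 \<le> 0"
  define S where "S = {0..t1} \<inter> \<phi> -` {..0}"
  have cont: "continuous_on {0..t1} \<phi>"
  proof (rule DERIV_continuous_on[where D=\<phi>'])
    fix x assume "x \<in> {0..t1}"
    then show "(\<phi> has_real_derivative \<phi>' x) (at x within {0..t1})"
      using has_field_derivative_subset[OF d[of x]] t1 by auto
  qed
  have cl: "closed S" unfolding S_def
    by (rule continuous_closed_preimage[OF cont]) auto
  have ne: "S \<noteq> {}" using i t1 unfolding S_def by auto
  have bdd: "bdd_above S" unfolding S_def by (auto intro: bdd_aboveI[where M=t1])
  define s0 where "s0 = Sup S"
  have s0S: "s0 \<in> S" using closed_contains_Sup[OF ne bdd cl] s0_def by simp
  then have s0: "0 \<le> s0" "s0 \<le> t1" "\<phi> s0 \<le> 0" unfolding S_def by auto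
  then have lt: "s0 < t1" using neg by (metis order_le_less)
  have pos: "\<phi> x > 0" if "s0 < x" "x \<le> t1" for x
  proof (rule ccontr)
    assume "\<not> \<phi> x > 0"
    then have "x \<in> S" using that s0 unfolding S_def by auto
    then have "x \<le> s0" unfolding s0_def by (rule cSup_upper[OF _ bdd])
    then show False using that by simp
  qed
  have "\<And>t. s0 \<le> t \<Longrightarrow> t \<le> t1 \<Longrightarrow> (\<phi> has_derivative (\<lambda>h. \<phi>' t * h)) (at t within {s0..t1})"
  proof -
    fix t assume "s0 \<le> t" "t \<le> t1"
    then have "(\<phi> has_real_derivative \<phi>' t) (at t within {s0..t1})"
      using has_field_derivative_subset[OF d[of t]] s0 t1 by auto
    then show "(\<phi> has_derivative (\<lambda>h. \<phi>' t * h)) (at t within {s0..t1})"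
      by (simp add: has_field_derivative_def)
  qed
  from mvt_simple[OF lt this] obtain x where x: "x \<in> {s0<..<t1}" "\<phi> t1 - \<phi> s0 = \<phi>' x * (t1 - s0)"
    by blast
  have "\<phi>' x \<le> 0" using p[of x] pos[of x] x(1) s0 t1 by auto
  then have "\<phi>' x * (t1 - s0) \<le> 0" using lt by (simp add: mult_nonpos_nonneg)
  then show False using x(2) s0 neg by simp
qed



lemma alg_y:
  fixes r w g0 qq D t :: real
  assumes r: "r > 0" and g: "g0 > 0" and s: "g0^2 = qq"
  shows "(-(\<bar>w\<bar>/g0)*(r - \<bar>w\<bar>/g0*t) + D/(r^2*qq)*t)^2
       = (w^2 + D/r^2)/qq * ((r - \<bar>w\<bar>/g0*t)^2 + D/(r^2*qq)*t^2) - D/qq"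
proof -
  define a where "a = \<bar>w\<bar>/g0"
  define b where "b = D/(r^2*qq)"
  have qq: "qq > 0" using s g by auto
  have e1: "(w^2 + D/r^2)/qq = a^2 + b" unfolding a_def b_def using s g r qq
    by (simp add: field_simps power2_abs power_divide)
  have e2: "D/qq = b * r^2" unfolding b_def using r qq by (simp add: field_simps)
  have "(-a*(r - a*t) + b*t)^2 = (a^2 + b) * ((r - a*t)^2 + b*t^2) - b * r^2"
    by (simp add: algebra_simps power2_eq_square)
  then show ?thesis unfolding e1 e2 a_def[symmetric] b_def[symmetric] .
qed

lemma alg_x:
  fixes R r w l M g0 :: real
  assumes "R > 0" "r > 0" "M \<ge> 0" "g0 > 0"
  shows "R^2 * (w^2 + l/r^2 + 2*M*g0/r) - l - 2*M*g0*R \<ge> (w^2 + (l + M*r*g0)/r^2) * R^2 - (l + M*r*g0)"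
proof -
  have "R^2 * (w^2 + l/r^2 + 2*M*g0/r) - l - 2*M*g0*R - ((w^2 + (l + M*r*g0)/r^2) * R^2 - (l + M*r*g0))
      = M*g0*(R-r)^2/r" using assms by (simp add: field_simps power2_eq_square)
  moreover have "M*g0*(R-r)^2/r \<ge> 0" using assms by simp
  ultimately show ?thesis by (metis diff_ge_0_iff_ge)
qed

lemma sq_cmp:
  fixes x y :: real
  assumes "x \<le> 0" "y^2 \<le> x^2"
  shows "x \<le> y"
proof -
  have "-y \<le> -x" by (rule power2_le_imp_le) (use assms in auto)
  then show ?thesis by simp
qed

lemma r_upper:
  fixes R1 r w l M g0 :: real
  assumes "R1 > 0" "r > 0" "M \<ge> 0" "g0 > 0" "l > 0"
    and F: "w^2 + l/r^2 + 2*M*g0/r \<le> l/R1^2 + 2*M*g0/R1"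
  shows "R1 \<le> r * sqrt ((l + M*r*g0) / (r^2*w^2 + (l + M*r*g0)))"
proof -
  define D where "D = l + M*r*g0"
  have Dp: "D > 0" unfolding D_def using assms by (simp add: add_pos_nonneg)
  have den: "r^2*w^2 + D > 0" using Dp by (simp add: add_nonneg_pos)
  have F2: "(w^2 + l/r^2 + 2*M*g0/r) * (R1^2 * r^2) \<le> (l/R1^2 + 2*M*g0/R1) * (R1^2 * r^2)"
    using F assms by (intro mult_right_mono) auto
  have F3: "w^2*R1^2*r^2 + l*R1^2 + 2*M*g0*r*R1^2 \<le> l*r^2 + 2*M*g0*R1*r^2"
    using F2 assms by (simp add: field_simps power2_eq_square)
  have sq: "M*g0*r*(r - R1)^2 \<ge> 0" using assms by simp
  have key: "R1^2 * (r^2*w^2 + D) \<le> r^2 * D"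
    using F3 sq unfolding D_def by (simp add: algebra_simps power2_eq_square)
  have "R1^2 \<le> r^2 * D / (r^2*w^2 + D)" using key den by (simp add: field_simps)
  also have "\<dots> = (r * sqrt (D / (r^2*w^2 + D)))^2"
    using Dp den by (simp add: power_mult_distrib)
  finally have "R1^2 \<le> (r * sqrt (D / (r^2*w^2 + D)))^2" .
  then show ?thesis unfolding D_def[symmetric]
    by (rule power2_le_imp_le) (use assms Dp den in auto)
qed

lemma r_lower:
  fixes R1 r w l :: real
  assumes "R1 > 0" "r > 0" "l > 0"
    and E: "l/R1^2 \<le> w^2 + l/r^2"
  shows "r * sqrt (l / (r^2*w^2 + l)) \<le> R1"
proof -
  have den: "r^2*w^2 + l > 0" using assms by (simp add: add_nonneg_pos)
  have E2: "l/R1^2 * (R1^2 * r^2) \<le> (w^2 + l/r^2) * (R1^2 * r^2)"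
    using E assms by (intro mult_right_mono) auto
  have key: "l * r^2 \<le> R1^2 * (r^2*w^2 + l)" using E2 assms by (simp add: field_simps power2_eq_square)
  have "(r * sqrt (l / (r^2*w^2 + l)))^2 = r^2 * l / (r^2*w^2 + l)"
    using den assms by (simp add: power_mult_distrib)
  also have "\<dots> \<le> R1^2" using key den by (simp add: field_simps)
  finally show ?thesis by (rule power2_le_imp_le) (use assms in auto)
qed


theorem lemma1:
  fixes f :: "real \<Rightarrow> real \<Rightarrow> real \<Rightarrow> real \<Rightarrow> real"
    and R W L :: "real \<Rightarrow> real" and r w l :: real
  assumes f_nonneg: "\<And>t r w l. f t r w l \<ge> 0"
    and m_bounds: "\<And>t s. t \<ge> 0 \<Longrightarrow> s > 0 \<Longrightarrow>
                     0 \<le> enclosed_mass f t s \<and> enclosed_mass f t s \<le> total_mass f"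
    and r_pos: "r > 0" and l_pos: "l > 0" and w_neg: "w < 0"
    and R_pos: "\<And>t. t \<ge> 0 \<Longrightarrow> R t > 0"
    and R_ode: "\<And>t. t \<ge> 0 \<Longrightarrow>
       (R has_real_derivative (W t / sqrt (1 + (W t)^2 + L t / (R t)^2))) (at t within {0..})"
    and W_ode: "\<And>t. t \<ge> 0 \<Longrightarrow>
       (W has_real_derivative (L t / ((R t)^3 * sqrt (1 + (W t)^2 + L t / (R t)^2))
                               + enclosed_mass f t (R t) / (R t)^2)) (at t within {0..})"
    and L_ode: "\<And>t. t \<ge> 0 \<Longrightarrow> (L has_real_derivative 0) (at t within {0..})"
    and init: "R 0 = r" "W 0 = w" "L 0 = l"
  shows "let M = total_mass f;
             D = l + M * r * sqrt (1 + w^2 + l / r^2);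
             P = (\<lambda>T0. T0 > 0 \<and> (\<forall>t\<in>{0..<T0}. W t < 0) \<and> W T0 = 0 \<and> (\<forall>t>T0. W t > 0))
         in (\<exists>T0. P T0 \<and> (\<forall>T. P T \<longrightarrow> T = T0)
               \<and> r * (1 - sqrt (D / (r^2 * w^2 + D))) \<le> T0
               \<and> T0 \<le> - w * r^3 * sqrt (1 + w^2 + l / r^2) / l
               \<and> r * sqrt (l / (r^2 * w^2 + l)) \<le> R T0
               \<and> R T0 \<le> r * sqrt (D / (r^2 * w^2 + D))
               \<and> (\<forall>t\<in>{0..T0}. (W t)^2 + l / (R t)^2 \<le> w^2 + l / r^2)
               \<and> (\<forall>t\<in>{0..T0}. (R t)^2 \<le>
                    (r - \<bar>w\<bar> / sqrt (1 + w^2 + l / r^2) * t)^2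
                    + D / (r^2 * (1 + w^2 + l / r^2)) * t^2))"
proof -
  define M where "M = total_mass f"
  define m where "m t = enclosed_mass f t (R t)" for t
  define g where "g t = sqrt (1 + (W t)^2 + l/(R t)^2)" for t
  define g0 where "g0 = sqrt (1 + w^2 + l/r^2)"
  define D where "D = l + M * r * g0"
  have M0: "0 \<le> M" using m_bounds[of 0 1] M_def by auto
  have mb: "0 \<le> m t" "m t \<le> M" if "t \<ge> 0" for t
    using m_bounds[of t "R t"] R_pos[OF that] m_def M_def that by auto
  have Lc: "L t = l" if t: "t \<ge> 0" for t
  proof -
    have d: "(L has_real_derivative 0) (at s within {0..t})" if "0 \<le> s" "s \<le> t" for s
      using has_field_derivative_subset[OF L_ode[of s]] that by auto
    have "L 0 \<le> L t" by (rule mono_deriv[OF t d]) auto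
    moreover have "(\<lambda>s. - L s) 0 \<le> (\<lambda>s. - L s) t"
      by (rule mono_deriv[OF t, where g'="\<lambda>_. 0"]) (auto intro!: derivative_eq_intros d)
    ultimately show ?thesis using init by simp
  qed
  have g1: "g t \<ge> 1" if "t \<ge> 0" for t
  proof -
    have "1 \<le> 1 + (W t)^2 + l/(R t)^2" using l_pos by (simp add: add_nonneg_nonneg)
    then show ?thesis unfolding g_def by simp
  qed
  have gpos: "g t > 0" if "t \<ge> 0" for t using g1[OF that] by simp
  have g00: "g 0 = g0" unfolding g_def g0_def using init by simp
  have g0pos: "g0 > 0" using gpos[of 0] g00 by simp
  have Rd: "(R has_real_derivative W t / g t) (at t within {0..})" if "t \<ge> 0" for t
    using R_ode[OF that] Lc[OF that] unfolding g_def by simp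
  have Wd: "(W has_real_derivative (l / ((R t)^3 * g t) + m t / (R t)^2)) (at t within {0..})"
    if "t \<ge> 0" for t
    using W_ode[OF that] Lc[OF that] unfolding g_def m_def by simp
  have Wdpos: "l / ((R t)^3 * g t) + m t / (R t)^2 > 0" if "t \<ge> 0" for t
    using l_pos R_pos[OF that] gpos[OF that] mb[OF that] by (simp add: add_pos_nonneg)
  have sub: "{a..b} \<subseteq> {0::real..}" if "0 \<le> a" for a b using that by auto
  have Wmono: "W a < W b" if "0 \<le> a" "a < b" for a b
    by (rule smono_deriv[OF that(2), where g'="\<lambda>t. l / ((R t)^3 * g t) + m t / (R t)^2"])
       (use that in \<open>auto intro: has_field_derivative_subset[OF Wd] Wdpos\<close>)
  define e where "e t = (W t)^2 + l/(R t)^2" for t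
  have ed: "(e has_real_derivative 2 * W t * m t / (R t)^2) (at t within {0..})" if t: "t \<ge> 0" for t
  proof -
    have Rne: "R t \<noteq> 0" using R_pos[OF t] by simp
    have "((\<lambda>t. (W t)^2 + l/(R t)^2) has_real_derivative
       (2 * W t * (l / ((R t)^3 * g t) + m t / (R t)^2) - l * (2 * R t * (W t / g t)) / ((R t)^2)^2))
       (at t within {0..})"
      by (rule derivative_eq_intros Wd[OF t] Rd[OF t] refl | simp add: Rne)+
    moreover have "2 * W t * (l / ((R t)^3 * g t) + m t / (R t)^2) - l * (2 * R t * (W t / g t)) / ((R t)^2)^2
        = 2 * W t * m t / (R t)^2"
      using Rne gpos[OF t] by (simp add: field_simps power2_eq_square power3_eq_cube)
    ultimately show ?thesis unfolding e_def by simp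
  qed
  define F where "F t = e t + 2 * M * g0 / R t" for t
  have Fd: "(F has_real_derivative 2 * W t * m t / (R t)^2 - 2 * M * g0 * (W t / g t) / (R t)^2) (at t within {0..})" if t: "t \<ge> 0" for t
  proof -
    have Rne: "R t \<noteq> 0" using R_pos[OF t] by simp
    have "((\<lambda>t. e t + 2 * M * g0 / R t) has_real_derivative
       (2 * W t * m t / (R t)^2 - 2 * M * g0 * (W t / g t) / (R t * R t)))
       (at t within {0..})"
      by (rule derivative_eq_intros ed[OF t] Rd[OF t] refl | simp add: Rne)+
    then show ?thesis unfolding F_def by (simp add: power2_eq_square)
  qed
  have phase: "R t \<le> r \<and> e t \<le> e 0 \<and> g t \<le> g0 \<and> F 0 \<le> F t"
    if T: "0 \<le> T" and Wn: "\<forall>s\<in>{0..T}. W s \<le> 0" and t: "0 \<le> t" "t \<le> T" for T t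
  proof -
    have Rt: "R t \<le> r"
    proof -
      have "(\<lambda>s. - R s) 0 \<le> (\<lambda>s. - R s) t"
      proof (rule mono_deriv[OF t(1), where g'="\<lambda>s. - (W s / g s)"])
        fix s assume s: "0 \<le> s" "s \<le> t"
        show "((\<lambda>s. - R s) has_real_derivative - (W s / g s)) (at s within {0..t})"
          using has_field_derivative_subset[OF Rd[of s]] s by (auto intro!: derivative_eq_intros)
      next
        fix s assume s: "0 < s" "s < t"
        then show "0 \<le> - (W s / g s)" using Wn gpos[of s] t by (auto simp: divide_nonpos_pos)
      qed
      then show ?thesis using init by simp
    qed
    have et: "e t \<le> e 0"
    proof -
      have "(\<lambda>s. - e s) 0 \<le> (\<lambda>s. - e s) t"
      proof (rule mono_deriv[OF t(1), where g'="\<lambda>s. - (2 * W s * m s / (R s)^2)"])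
        fix s assume s: "0 \<le> s" "s \<le> t"
        show "((\<lambda>s. - e s) has_real_derivative - (2 * W s * m s / (R s)^2)) (at s within {0..t})"
          using has_field_derivative_subset[OF ed[of s]] s by (auto intro!: derivative_eq_intros)
      next
        fix s assume s: "0 < s" "s < t"
        then have "W s \<le> 0" "0 \<le> m s" using Wn mb[of s] t by auto
        then have "2 * W s * m s \<le> 0" by (simp add: mult_nonpos_nonneg)
        then show "0 \<le> - (2 * W s * m s / (R s)^2)" by (simp add: divide_nonpos_nonneg)
      qed
      then show ?thesis by simp
    qed
    have gle: "g s \<le> g0" if s: "0 \<le> s" "s \<le> T" for s
    proof -
      have "e s \<le> e 0"
      proof -
        have "(\<lambda>u. - e u) 0 \<le> (\<lambda>u. - e u) s"
        proof (rule mono_deriv[OF s(1), where g'="\<lambda>u. - (2 * W u * m u / (R u)^2)"])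
          fix u assume u: "0 \<le> u" "u \<le> s"
          show "((\<lambda>s. - e s) has_real_derivative - (2 * W u * m u / (R u)^2)) (at u within {0..s})"
            using has_field_derivative_subset[OF ed[of u]] u by (auto intro!: derivative_eq_intros)
        next
          fix u assume u: "0 < u" "u < s"
          then have "W u \<le> 0" "0 \<le> m u" using Wn mb[of u] s by auto
          then have "2 * W u * m u \<le> 0" by (simp add: mult_nonpos_nonneg)
          then show "0 \<le> - (2 * W u * m u / (R u)^2)" by (simp add: divide_nonpos_nonneg)
        qed
        then show ?thesis by simp
      qed
      then have "1 + (W s)^2 + l/(R s)^2 \<le> 1 + w^2 + l/r^2" unfolding e_def using init by simp
      then show ?thesis unfolding g_def g0_def by (rule real_sqrt_le_mono)
    qed
    have Ft: "F 0 \<le> F t"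
    proof (rule mono_deriv[OF t(1), where g'="\<lambda>s. 2 * W s * m s / (R s)^2 - 2 * M * g0 * (W s / g s) / (R s)^2"])
      fix s assume s: "0 \<le> s" "s \<le> t"
      show "(F has_real_derivative 2 * W s * m s / (R s)^2 - 2 * M * g0 * (W s / g s) / (R s)^2) (at s within {0..t})"
        using has_field_derivative_subset[OF Fd[of s]] s by auto
    next
      fix s assume s: "0 < s" "s < t"
      have s0: "0 \<le> s" "s \<le> T" using s t by auto
      have Ws: "W s \<le> 0" using Wn s0 by auto
      have gs: "0 < g s" "g s \<le> g0" using gpos[OF s0(1)] gle[OF s0] by auto
      have "M \<le> M * g0 / g s" using M0 gs by (simp add: field_simps mult_left_mono)
      then have "m s - M * g0 / g s \<le> 0" using mb[OF s0(1)] by simp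
      then have "W s * (m s - M * g0 / g s) \<ge> 0" using Ws by (simp add: mult_nonpos_nonpos)
      then have "0 \<le> 2 * (W s * (m s - M * g0 / g s)) / (R s)^2" by simp
      also have "2 * (W s * (m s - M * g0 / g s)) / (R s)^2 = 2 * W s * m s / (R s)^2 - 2 * M * g0 * (W s / g s) / (R s)^2"
        using gs R_pos[OF s0(1)] by (simp add: field_simps)
      finally show "0 \<le> 2 * W s * m s / (R s)^2 - 2 * M * g0 * (W s / g s) / (R s)^2" .
    qed
    show ?thesis using Rt et gle[OF t(1) t(2)] Ft by simp
  qed
  define Tb where "Tb = - w * r^3 * g0 / l"
  have Tbpos: "Tb > 0" unfolding Tb_def using w_neg r_pos g0pos l_pos
    by (intro divide_pos_pos mult_pos_pos) auto
  have Wcont: "continuous_on {a..b} W" if "0 \<le> a" for a b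
  proof (rule DERIV_continuous_on[where D="\<lambda>t. l / ((R t)^3 * g t) + m t / (R t)^2"])
    fix x assume "x \<in> {a..b}"
    then show "(W has_real_derivative l / ((R x)^3 * g x) + m x / (R x)^2) (at x within {a..b})"
      using has_field_derivative_subset[OF Wd[of x]] that by auto
  qed
  have WTb: "W Tb \<ge> 0"
  proof (rule ccontr)
    assume "\<not> W Tb \<ge> 0"
    then have WTbn: "W Tb < 0" by simp
    have Wn: "\<forall>s\<in>{0..Tb}. W s \<le> 0"
    proof
      fix s assume s: "s \<in> {0..Tb}"
      show "W s \<le> 0"
      proof (cases "s = Tb")
        case True then show ?thesis using WTbn by simp
      next
        case False then have "W s < W Tb" using s by (intro Wmono) auto
        then show ?thesis using WTbn by simp
      qed
    qed
    define k where "k = l / (r^3 * g0)"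
    have "(\<lambda>s. W s - s * k) 0 \<le> (\<lambda>s. W s - s * k) Tb"
    proof (rule mono_deriv[where g="\<lambda>s. W s - s * k" and a=0 and b=Tb and g'="\<lambda>s. (l / ((R s)^3 * g s) + m s / (R s)^2) - k"])
      show "0 \<le> Tb" using Tbpos by simp
    next
      fix s assume s: "0 \<le> s" "s \<le> Tb"
      show "((\<lambda>s. W s - s * k) has_real_derivative (l / ((R s)^3 * g s) + m s / (R s)^2) - k) (at s within {0..Tb})"
        using has_field_derivative_subset[OF Wd[of s]] s by (auto intro!: derivative_eq_intros)
    next
      fix s assume s: "0 < s" "s < Tb"
      have ph: "R s \<le> r" "g s \<le> g0" using phase[of Tb s] Wn s Tbpos by auto
      have Rs: "0 < R s" using R_pos[of s] s by simp
      have gs: "0 < g s" using gpos[of s] s by simp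
      have "(R s)^3 * g s \<le> r^3 * g0"
        using ph Rs gs by (intro mult_mono power_mono) auto
      then have "k \<le> l / ((R s)^3 * g s)" unfolding k_def using l_pos Rs gs r_pos g0pos
        by (intro divide_left_mono) (auto intro!: mult_pos_pos)
      moreover have "0 \<le> m s / (R s)^2" using mb[of s] s by simp
      ultimately show "0 \<le> (l / ((R s)^3 * g s) + m s / (R s)^2) - k" by simp
    qed
    moreover have "Tb * k = - w" unfolding Tb_def k_def using l_pos r_pos g0pos by (simp add: field_simps)
    ultimately have "W Tb \<ge> 0" using init by simp
    then show False using WTbn by simp
  qed
  obtain T0 where T0: "0 \<le> T0" "T0 \<le> Tb" "W T0 = 0"
    using IVT'[of W 0 0 Tb] init w_neg WTb Tbpos Wcont[of 0 Tb] by auto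
  have T0pos: "T0 > 0" using T0 init w_neg by (cases "T0 = 0") auto
  have Wbefore: "\<forall>t\<in>{0..<T0}. W t < 0" using Wmono T0 by fastforce
  have Wafter: "\<forall>t>T0. W t > 0" using Wmono T0 by fastforce
  have Wle: "\<forall>s\<in>{0..T0}. W s \<le> 0" using Wbefore T0 by (metis atLeastAtMost_iff atLeastLessThan_iff order_le_less)
  have uniq: "T = T0" if "T > 0" "W T = 0" for T
  proof (rule ccontr)
    assume "T \<noteq> T0"
    then have "T < T0 \<or> T > T0" by auto
    then show False using Wmono[of T T0] Wmono[of T0 T] that T0 by auto
  qed
  have part4: "\<forall>t\<in>{0..T0}. (W t)^2 + l/(R t)^2 \<le> w^2 + l/r^2"
    using phase[of T0] Wle T0 init unfolding e_def by auto
  define R1 where "R1 = R T0"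
  have R1pos: "R1 > 0" unfolding R1_def using R_pos T0 by simp
  have ph: "R T0 \<le> r \<and> e T0 \<le> e 0 \<and> g T0 \<le> g0 \<and> F 0 \<le> F T0"
    using phase[of T0 T0] Wle T0 by auto
  have E1: "l/R1^2 \<le> w^2 + l/r^2" using ph T0(3) init unfolding e_def R1_def by simp
  have F1: "w^2 + l/r^2 + 2*M*g0/r \<le> l/R1^2 + 2*M*g0/R1"
    using ph T0(3) init unfolding F_def e_def R1_def by simp
  have p3a: "r * sqrt (l / (r^2*w^2 + l)) \<le> R1"
    by (rule r_lower[OF R1pos r_pos l_pos E1])
  have p3b: "R1 \<le> r * sqrt (D / (r^2*w^2 + D))"
    unfolding D_def by (rule r_upper[OF R1pos r_pos M0 g0pos l_pos F1])
  have RT0: "r - T0 \<le> R1"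
  proof -
    have "(\<lambda>s. R s + s) 0 \<le> (\<lambda>s. R s + s) T0"
    proof (rule mono_deriv[where g="\<lambda>s. R s + s" and a=0 and b=T0 and g'="\<lambda>s. W s / g s + 1"])
      show "0 \<le> T0" using T0 by simp
    next
      fix s assume s: "0 \<le> s" "s \<le> T0"
      show "((\<lambda>s. R s + s) has_real_derivative W s / g s + 1) (at s within {0..T0})"
        using has_field_derivative_subset[OF Rd[of s]] s by (auto intro!: derivative_eq_intros)
    next
      fix s assume s: "0 < s" "s < T0"
      have gs: "0 < g s" using gpos[of s] s by simp
      have "\<bar>W s\<bar> = sqrt ((W s)^2)" by simp
      also have "\<dots> \<le> g s" unfolding g_def using l_pos by (intro real_sqrt_le_mono) simp
      finally have "- g s \<le> W s" by simp
      then have "-1 \<le> W s / g s" using gs by (simp add: field_simps)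
      then show "0 \<le> W s / g s + 1" by simp
    qed
    then show ?thesis using init unfolding R1_def by simp
  qed
  have p2a: "r * (1 - sqrt (D / (r^2 * w^2 + D))) \<le> T0"
    using RT0 p3b by (simp add: algebra_simps)
  have p2b: "T0 \<le> - w * r^3 * g0 / l" using T0 unfolding Tb_def by simp
  define qq where "qq = 1 + w^2 + l/r^2"
  have g0sq: "g0^2 = qq" unfolding g0_def qq_def using l_pos r_pos
    by (simp add: add_nonneg_nonneg)
  have qqpos: "qq > 0" using g0sq g0pos by auto
  define aa where "aa = \<bar>w\<bar>/g0"
  define bb where "bb = D/(r^2*qq)"
  define A where "A t = (r - aa*t)^2 + bb*t^2" for t
  have part5: "(R t)^2 \<le> A t" if t: "0 \<le> t" "t \<le> T0" for t
  proof -
    define Ad where "Ad t = 2 * (-aa*(r - aa*t) + bb*t)" for t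
    have "(\<lambda>s. (R s)^2 - A s) t \<le> 0"
    proof (rule stay_nonpos[where \<phi>="\<lambda>s. (R s)^2 - A s" and T=T0 and \<phi>'="\<lambda>s. 2 * (R s * (W s / g s)) - Ad s"])
      show "0 \<le> T0" using T0 by simp
    next
      fix s assume s: "0 \<le> s" "s \<le> T0"
      show "((\<lambda>s. (R s)^2 - A s) has_real_derivative 2 * (R s * (W s / g s)) - Ad s) (at s within {0..T0})"
      proof -
        have d1: "((\<lambda>s. (R s)^2) has_real_derivative (of_nat 2 * ((W s / g s) * (R s)^(2 - Suc 0)))) (at s within {0..T0})"
          by (rule DERIV_power[OF has_field_derivative_subset[OF Rd[of s]]]) (use s in auto)
        have d2: "(A has_real_derivative (2 * (r - aa * s) * (- aa) + bb * (2 * s))) (at s within {0..T0})"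
        proof -
          have h1: "((\<lambda>t. r - aa*t) has_real_derivative (0 - aa*1)) (at s within {0..T0})"
            by (intro DERIV_diff DERIV_const DERIV_cmult DERIV_ident)
          have h2: "((\<lambda>t. (r - aa*t)^2) has_real_derivative (of_nat 2 * ((0 - aa*1) * (r - aa* s)^(2 - Suc 0)))) (at s within {0..T0})"
            by (rule DERIV_power[OF h1])
          have h3: "((\<lambda>t. t^2) has_real_derivative of_nat 2 * (1 * s^(2 - Suc 0))) (at s within {0..T0})"
            by (rule DERIV_power[OF DERIV_ident])
          have h4: "((\<lambda>t. bb*t^2) has_real_derivative bb * (of_nat 2 * (1 * s^(2 - Suc 0)))) (at s within {0..T0})"
            by (rule DERIV_cmult[OF h3])
          have "((\<lambda>t. (r - aa*t)^2 + bb*t^2) has_real_derivative (of_nat 2 * ((0 - aa*1) * (r - aa* s)^(2 - Suc 0))) + bb * (of_nat 2 * (1 * s^(2 - Suc 0)))) (at s within {0..T0})"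
            by (rule DERIV_add[OF h2 h4])
          moreover have "(of_nat 2 * ((0 - aa*1) * (r - aa* s)^(2 - Suc 0))) + bb * (of_nat 2 * (1 * s^(2 - Suc 0))) = 2 * (r - aa * s) * (- aa) + bb * (2 * s)"
            by simp
          ultimately show ?thesis unfolding A_def by (rule DERIV_cong)
        qed
        have "((\<lambda>s. (R s)^2 - A s) has_real_derivative (of_nat 2 * ((W s / g s) * (R s)^(2 - Suc 0))) - (2 * (r - aa * s) * (- aa) + bb * (2 * s))) (at s within {0..T0})"
          by (rule DERIV_diff[OF d1 d2])
        moreover have "(of_nat 2 * ((W s / g s) * (R s)^(2 - Suc 0))) - (2 * (r - aa * s) * (- aa) + bb * (2 * s)) = 2 * (R s * (W s / g s)) - Ad s"
          unfolding Ad_def by (simp add: algebra_simps)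
        ultimately show ?thesis by simp
      qed
    next
      show "(\<lambda>s. (R s)^2 - A s) 0 \<le> 0" unfolding A_def using init by simp
    next
      fix s assume s: "0 \<le> s" "s \<le> T0" and pos: "(\<lambda>s. (R s)^2 - A s) s > 0"
      define x where "x = R s * (W s / g s)"
      define y where "y = -aa*(r - aa* s) + bb* s"
      have Rs: "R s > 0" using R_pos s by simp
      have gs: "0 < g s" "g s \<le> g0" using gpos[of s] phase[of T0 s] Wle s T0 by auto
      have Fs: "F 0 \<le> F s" using phase[of T0 s] Wle s T0 by auto
      have Ws: "W s \<le> 0" using Wle s by auto
      have x0: "x \<le> 0" unfolding x_def using Rs gs Ws
        by (simp add: mult_nonneg_nonpos divide_nonpos_pos)
      have y2: "y^2 = (w^2 + D/r^2)/qq * A s - D/qq"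
        unfolding y_def A_def aa_def bb_def by (rule alg_y[OF r_pos g0pos g0sq])
      have c0: "(w^2 + D/r^2)/qq \<ge> 0" using qqpos D_def l_pos M0 r_pos g0pos by simp
      have x2a: "x^2 = (R s)^2 * (W s)^2 / (g s)^2" unfolding x_def by (simp add: power_mult_distrib power_divide)
      have "(g s)^2 \<le> qq" using power_mono[of "g s" g0 2] gs g0sq by simp
      then have x2b: "(R s)^2 * (W s)^2 / qq \<le> x^2" unfolding x2a using gs qqpos
        by (intro divide_left_mono) (auto intro!: mult_pos_pos)
      have Fs2: "w^2 + l/r^2 + 2*M*g0/r \<le> (W s)^2 + l/(R s)^2 + 2*M*g0/R s"
        using Fs init unfolding F_def e_def by simp
      have "(R s)^2 * (w^2 + l/r^2 + 2*M*g0/r) \<le> (R s)^2 * ((W s)^2 + l/(R s)^2 + 2*M*g0/R s)"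
        using Fs2 by (intro mult_left_mono) auto
      also have "\<dots> = (R s)^2 * (W s)^2 + l + 2*M*g0*R s" using Rs by (simp add: field_simps power2_eq_square)
      finally have iii: "(R s)^2 * (w^2 + l/r^2 + 2*M*g0/r) - l - 2*M*g0*R s \<le> (R s)^2 * (W s)^2" by simp
      have iv: "(w^2 + D/r^2) * (R s)^2 - D \<le> (R s)^2 * (W s)^2"
        using alg_x[OF Rs r_pos M0 g0pos, of w l] iii unfolding D_def by linarith
      have "(w^2 + D/r^2)/qq * A s \<le> (w^2 + D/r^2)/qq * (R s)^2"
        using pos c0 by (intro mult_left_mono) auto
      then have "y^2 \<le> (w^2 + D/r^2)/qq * (R s)^2 - D/qq"
        unfolding y2 by linarith
      also have "\<dots> = ((w^2 + D/r^2) * (R s)^2 - D) / qq" using qqpos by (simp add: diff_divide_distrib)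
      also have "\<dots> \<le> (R s)^2 * (W s)^2 / qq" using iv qqpos by (simp add: divide_right_mono)
      also have "\<dots> \<le> x^2" by (rule x2b)
      finally have "x \<le> y" by (rule sq_cmp[OF x0])
      then show "2 * (R s * (W s / g s)) - Ad s \<le> 0" unfolding Ad_def x_def y_def by simp
    qed (use t in auto)
    then show ?thesis by simp
  qed
  show ?thesis
    unfolding Let_def M_def[symmetric] g0_def[symmetric] D_def[symmetric]
  proof (intro exI[of _ T0] conjI)
    show "T0 > 0" "\<forall>t\<in>{0..<T0}. W t < 0" "W T0 = 0" "\<forall>t>T0. W t > 0"
      using T0pos Wbefore T0 Wafter by auto
    show "\<forall>T. (T > 0 \<and> (\<forall>t\<in>{0..<T}. W t < 0) \<and> W T = 0 \<and> (\<forall>t>T. W t > 0)) \<longrightarrow> T = T0"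
      using uniq by auto
    show "r * (1 - sqrt (D / (r^2 * w^2 + D))) \<le> T0" by (rule p2a)
    show "T0 \<le> - w * r^3 * g0 / l" by (rule p2b)
    show "r * sqrt (l / (r^2 * w^2 + l)) \<le> R T0" using p3a R1_def by simp
    show "R T0 \<le> r * sqrt (D / (r^2 * w^2 + D))" using p3b R1_def by simp
    show "\<forall>t\<in>{0..T0}. (W t)^2 + l / (R t)^2 \<le> w^2 + l / r^2" by (rule part4)
    show "\<forall>t\<in>{0..T0}. (R t)^2 \<le> (r - \<bar>w\<bar> / g0 * t)^2 + D / (r^2 * (1 + w^2 + l / r^2)) * t^2"
      using part5 unfolding A_def qq_def aa_def bb_def by auto
  qed
qed

end
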